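(* Let $D\subset\mathbb{R}^2\cong\mathbb{C}$ be a connected and simply connected domain with non-empty interior, bounded by a smooth closed curve $\gamma$. Let $F:D\to D$ be a moderate symplectomorphism which is the identity on $\gamma$, let $G=\{(z,F(z)):z\in D\}\subset\mathbb{C}^2$ be its graph, and let $\bar D=\{(z,z):z\in D\}$. Then the map $\mathrm{pr}:G\to\bar D$, $\mathrm{pr}(z_1,z_2)=\big(\tfrac{z_1+z_2}{2},\tfrac{z_1+z_2}{2}\big)$, is a diffeomorphism onto $\bar D$.
   Context: A symplectomorphism of $D$ is an area- and orientation-preserving diffeomorphism $D\to D$. $F=(f,g)$ is moderate if its graph $G$ is everywhere transverse to the fibers of $\mathrm{pr}$ (the tangent plane of $G$ is complementary to $\ker d\,\mathrm{pr}$), equivalently $2+f_x+g_y\neq0$ on $D$. *)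

theory Defs
  imports "HOL-Analysis.Analysis"
begin

fun Ck :: "nat \<Rightarrow> 'a::real_normed_vector set \<Rightarrow> ('a \<Rightarrow> 'b::real_normed_vector) \<Rightarrow> bool" where
  "Ck 0 U f = continuous_on U f"
| "Ck (Suc n) U f =
     ((\<forall>x\<in>U. f differentiable (at x)) \<and>
      (\<forall>v. Ck n U (\<lambda>x. frechet_derivative f (at x) v)))"

definition smooth_open :: "'a::real_normed_vector set \<Rightarrow> ('a \<Rightarrow> 'b::real_normed_vector) \<Rightarrow> bool" where
  "smooth_open U f \<longleftrightarrow> open U \<and> (\<forall>n. Ck n U f)"

text \<open>Smooth map on an arbitrary subset S: locally the restriction of a smooth map
  defined on an open neighbourhood (standard notion for manifolds with boundary /
  embedded submanifolds).\<close>
definition smooth_on_set :: "'a::real_normed_vector set \<Rightarrow> ('a \<Rightarrow> 'b::real_normed_vector) \<Rightarrow> bool" where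
  "smooth_on_set S f \<longleftrightarrow>
     (\<forall>x\<in>S. \<exists>U g. x \<in> U \<and> smooth_open U g \<and> (\<forall>y\<in>S \<inter> U. g y = f y))"

definition diffeomorphism_onto ::
  "'a::real_normed_vector set \<Rightarrow> 'b::real_normed_vector set \<Rightarrow> ('a \<Rightarrow> 'b) \<Rightarrow> bool" where
  "diffeomorphism_onto S T f \<longleftrightarrow>
     smooth_on_set S f \<and> f ` S = T \<and>
     (\<exists>g. smooth_on_set T g \<and> g ` T = S \<and> (\<forall>x\<in>S. g (f x) = x) \<and> (\<forall>y\<in>T. f (g y) = y))"

definition smooth_closed_curve :: "(real \<Rightarrow> complex) \<Rightarrow> bool" where
  "smooth_closed_curve \<gamma> \<longleftrightarrow>
     smooth_open UNIV \<gamma> \<and> (\<forall>t. \<gamma> (t + 1) = \<gamma> t) \<and> inj_on \<gamma> {0..<1} \<and>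
     (\<forall>t. vector_derivative \<gamma> (at t) \<noteq> 0)"

text \<open>Derivative of F at z (relative to D); partial derivatives with F = (f,g):
  f_x = Re (L 1), g_x = Im (L 1), f_y = Re (L i), g_y = Im (L i).\<close>
definition jac_det :: "(complex \<Rightarrow> complex) \<Rightarrow> complex set \<Rightarrow> complex \<Rightarrow> real" where
  "jac_det F D z =
     (let L = frechet_derivative F (at z within D)
      in Re (L 1) * Im (L \<i>) - Im (L 1) * Re (L \<i>))"

text \<open>Symplectomorphism of D: diffeomorphism D \<rightarrow> D preserving the area form
  dx \<and> dy (i.e. Jacobian determinant 1: area and orientation preserving).\<close>
definition symplectomorphism :: "complex set \<Rightarrow> (complex \<Rightarrow> complex) \<Rightarrow> bool" where
  "symplectomorphism D F \<longleftrightarrow> diffeomorphism_onto D D F \<and> (\<forall>z\<in>D. jac_det F D z = 1)"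

definition moderate :: "complex set \<Rightarrow> (complex \<Rightarrow> complex) \<Rightarrow> bool" where
  "moderate D F \<longleftrightarrow>
     (\<forall>z\<in>D. let L = frechet_derivative F (at z within D)
            in 2 + Re (L 1) + Im (L \<i>) \<noteq> 0)"

end

theory Submission
  imports Defs
begin

lemma CkSucI: "(\<forall>x\<in>U. f differentiable (at x)) \<Longrightarrow> (\<And>v. Ck n U (\<lambda>x. frechet_derivative f (at x) v)) \<Longrightarrow> Ck (Suc n) U f"
  by simp
lemma CkSucD1: "Ck (Suc n) U f \<Longrightarrow> x \<in> U \<Longrightarrow> f differentiable (at x)"
  by simp
lemma CkSucD2: "Ck (Suc n) U f \<Longrightarrow> Ck n U (\<lambda>x. frechet_derivative f (at x) v)"
  by simp
lemma Ck0: "Ck 0 U f = continuous_on U f" by simp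
declare Ck.simps[simp del]

lemma CkSucD: "Ck (Suc n) U f \<Longrightarrow> x \<in> U \<Longrightarrow> (f has_derivative frechet_derivative f (at x)) (at x)"
  using CkSucD1 frechet_derivative_works by blast

lemma frechet_eq_open:
  assumes "open U" "x \<in> U" "\<forall>y\<in>U. f y = g y" "f differentiable (at x)"
  shows "frechet_derivative g (at x) = frechet_derivative f (at x)"
proof -
  have "(f has_derivative frechet_derivative f (at x)) (at x)"
    using assms(4) frechet_derivative_works by blast
  then have "(g has_derivative frechet_derivative f (at x)) (at x)"
    using has_derivative_transform_within_open[of f _ x UNIV U g] assms by auto
  then show ?thesis using frechet_derivative_at by metis
qed

lemma Ck_cong:
  assumes "open U" "Ck n U f" "\<forall>x\<in>U. f x = g x"
  shows "Ck n U g"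
  using assms(2,3)
proof (induction n arbitrary: f g)
  case 0
  then show ?case using continuous_on_cong by (auto simp: Ck0)
next
  case (Suc n)
  have d: "\<forall>x\<in>U. f differentiable (at x)" using Suc.prems CkSucD1 by blast
  have dg: "\<forall>x\<in>U. g differentiable (at x)"
  proof
    fix x assume "x \<in> U"
    then have "(f has_derivative frechet_derivative f (at x)) (at x)"
      using d frechet_derivative_works by blast
    then have "(g has_derivative frechet_derivative f (at x)) (at x)"
      using has_derivative_transform_within_open[of f _ x UNIV U g] Suc.prems assms(1) \<open>x\<in>U\<close> by auto
    then show "g differentiable (at x)" by (auto simp: differentiable_def)
  qed
  have "Ck n U (\<lambda>x. frechet_derivative g (at x) v)" for v
  proof (rule Suc.IH)
    show "Ck n U (\<lambda>x. frechet_derivative f (at x) v)" using CkSucD2 Suc.prems by blast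
    show "\<forall>x\<in>U. frechet_derivative f (at x) v = frechet_derivative g (at x) v"
      using frechet_eq_open[OF assms(1) _ Suc.prems(2)] d by auto
  qed
  then show ?case using dg CkSucI by blast
qed

lemma CkSucI_deriv:
  assumes "open U" "\<And>x. x \<in> U \<Longrightarrow> (f has_derivative D x) (at x)"
    "\<And>v. Ck n U (\<lambda>x. D x v)"
  shows "Ck (Suc n) U f"
proof (rule CkSucI)
  show "\<forall>x\<in>U. f differentiable (at x)" using assms(2) differentiable_def by blast
  fix v
  show "Ck n U (\<lambda>x. frechet_derivative f (at x) v)"
  proof (rule Ck_cong[OF assms(1) assms(3)[of v]], rule ballI)
    fix x assume "x \<in> U"
    then have "D x = frechet_derivative f (at x)" by (rule frechet_derivative_at[OF assms(2)])
    then show "D x v = frechet_derivative f (at x) v" by simp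
  qed
qed

lemma Ck_mono: "Ck (Suc n) U f \<Longrightarrow> Ck n U f"
proof (induction n arbitrary: f)
  case 0
  then show ?case
    by (auto simp: Ck0 Ck.simps intro!: continuous_at_imp_continuous_on differentiable_imp_continuous_within)
next
  case (Suc n)
  then show ?case by (auto simp: Ck.simps(2))
qed

lemma Ck_mono_add: "Ck (m + k) U f \<Longrightarrow> Ck m U f"
proof (induction k)
  case (Suc k)
  then show ?case using Ck_mono[of "m+k" U f] by simp
qed simp

lemma Ck_const: "Ck n U (\<lambda>x. c)"
proof (induction n arbitrary: c)
  case (Suc n)
  have "frechet_derivative (\<lambda>x. c) (at x) = (\<lambda>v. 0)" for x
    using frechet_derivative_at[OF has_derivative_const] by metis
  then show ?case using Suc by (simp add: Ck.simps(2))
qed (simp add: Ck0)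

lemma Ck_add:
  assumes "open U" "Ck n U f" "Ck n U g"
  shows "Ck n U (\<lambda>x. f x + g x)"
  using assms(2,3)
proof (induction n arbitrary: f g)
  case (Suc n)
  show ?case
  proof (rule CkSucI_deriv[OF assms(1)])
    fix x assume "x \<in> U"
    then show "((\<lambda>x. f x + g x) has_derivative (\<lambda>v. frechet_derivative f (at x) v + frechet_derivative g (at x) v)) (at x)"
      using has_derivative_add[OF CkSucD[OF Suc.prems(1) \<open>x\<in>U\<close>] CkSucD[OF Suc.prems(2) \<open>x\<in>U\<close>]] by blast
  next
    fix v show "Ck n U (\<lambda>x. frechet_derivative f (at x) v + frechet_derivative g (at x) v)"
      using Suc.IH Suc.prems CkSucD2 by blast
  qed
qed (auto intro: continuous_on_add simp: Ck0)

lemma Ck_scaleR: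
  fixes a :: "'a::real_normed_vector \<Rightarrow> real"
  assumes "open U" "Ck n U a" "Ck n U g"
  shows "Ck n U (\<lambda>x. a x *\<^sub>R g x)"
  using assms(2,3)
proof (induction n arbitrary: a g)
  case (Suc n)
  show ?case
  proof (rule CkSucI_deriv[OF assms(1)])
    fix x assume "x \<in> U"
    then show "((\<lambda>x. a x *\<^sub>R g x) has_derivative (\<lambda>v. a x *\<^sub>R frechet_derivative g (at x) v + frechet_derivative a (at x) v *\<^sub>R g x)) (at x)"
      using has_derivative_scaleR[OF CkSucD[OF Suc.prems(1) \<open>x\<in>U\<close>] CkSucD[OF Suc.prems(2) \<open>x\<in>U\<close>]] by blast
  next
    fix v show "Ck n U (\<lambda>x. a x *\<^sub>R frechet_derivative g (at x) v + frechet_derivative a (at x) v *\<^sub>R g x)"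
      apply (rule Ck_add[OF assms(1)])
      using Suc.IH Suc.prems Ck_mono CkSucD2 by blast+
  qed
qed (auto intro: continuous_intros simp: Ck0)

lemma Ck_linear:
  assumes "open U" "bounded_linear L" "Ck n U f"
  shows "Ck n U (\<lambda>x. L (f x))"
  using assms(3)
proof (induction n arbitrary: f)
  case 0
  then show ?case using bounded_linear.continuous_on[OF assms(2), of U f] by (simp add: Ck0)
next
  case (Suc n)
  show ?case
  proof (rule CkSucI_deriv[OF assms(1)])
    fix x assume "x \<in> U"
    then show "((\<lambda>x. L (f x)) has_derivative (\<lambda>v. L (frechet_derivative f (at x) v))) (at x)"
      using Suc.prems CkSucD bounded_linear.has_derivative[OF assms(2)] by blast
  next
    fix v show "Ck n U (\<lambda>x. L (frechet_derivative f (at x) v))"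
      using Suc.IH Suc.prems CkSucD2 by blast
  qed
qed

lemma Ck_inverse:
  fixes a :: "'a::real_normed_vector \<Rightarrow> real"
  assumes "open U" "Ck n U a" "\<forall>x\<in>U. a x \<noteq> 0"
  shows "Ck n U (\<lambda>x. inverse (a x))"
  using assms(2,3)
proof (induction n arbitrary: a)
  case 0
  then show ?case by (auto simp: Ck0 intro!: continuous_on_inverse)
next
  case (Suc n)
  show ?case
  proof (rule CkSucI_deriv[OF assms(1)])
    fix x assume "x \<in> U"
    then show "((\<lambda>x. inverse (a x)) has_derivative (\<lambda>v. - (inverse (a x) * frechet_derivative a (at x) v * inverse (a x)))) (at x)"
      using Deriv.has_derivative_inverse[OF _ CkSucD[OF Suc.prems(1) \<open>x\<in>U\<close>]] Suc.prems(2) \<open>x\<in>U\<close> by blast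
  next
    fix v
    have ci: "Ck n U (\<lambda>x. inverse (a x))" using Suc.IH[OF Ck_mono[OF Suc.prems(1)] Suc.prems(2)] .
    have "Ck n U (\<lambda>x. inverse (a x) *\<^sub>R (frechet_derivative a (at x) v *\<^sub>R inverse (a x)))"
      by (rule Ck_scaleR[OF assms(1) ci Ck_scaleR[OF assms(1) CkSucD2[OF Suc.prems(1)] ci]])
    then have "Ck n U (\<lambda>x. - (inverse (a x) *\<^sub>R (frechet_derivative a (at x) v *\<^sub>R inverse (a x))))"
      by (rule Ck_linear[OF assms(1) bounded_linear_minus[OF bounded_linear_ident]])
    then show "Ck n U (\<lambda>x. - (inverse (a x) * frechet_derivative a (at x) v * inverse (a x)))"
      by (simp add: mult.assoc)
  qed
qed

lemma Ck_pair:
  assumes "open U" "Ck n U f" "Ck n U g"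
  shows "Ck n U (\<lambda>x. (f x, g x))"
  using assms(2,3)
proof (induction n arbitrary: f g)
  case (Suc n)
  show ?case
  proof (rule CkSucI_deriv[OF assms(1)])
    fix x assume "x \<in> U"
    then show "((\<lambda>x. (f x, g x)) has_derivative (\<lambda>v. (frechet_derivative f (at x) v, frechet_derivative g (at x) v))) (at x)"
      using has_derivative_Pair[OF CkSucD[OF Suc.prems(1) \<open>x\<in>U\<close>] CkSucD[OF Suc.prems(2) \<open>x\<in>U\<close>]] by blast
  next
    fix v show "Ck n U (\<lambda>x. (frechet_derivative f (at x) v, frechet_derivative g (at x) v))"
      by (rule Suc.IH[OF CkSucD2[OF Suc.prems(1)] CkSucD2[OF Suc.prems(2)]])
  qed
qed (auto intro: continuous_on_Pair simp: Ck0)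

lemma Ck_fst:
  fixes f :: "'a::real_normed_vector \<Rightarrow> 'b::real_normed_vector"
  assumes "open V" "Ck n V f"
  shows "Ck n (V \<times> (UNIV::'c::real_normed_vector set)) (\<lambda>p. f (fst p))"
  using assms(2)
proof (induction n arbitrary: f)
  case 0
  then show ?case by (auto simp: Ck0 intro!: continuous_on_compose2[OF _ continuous_on_fst])
next
  case (Suc n)
  show ?case
  proof (rule CkSucI_deriv)
    show "open (V \<times> (UNIV::'c set))" using assms(1) by (simp add: open_Times)
    fix x :: "'a \<times> 'c" assume "x \<in> V \<times> (UNIV::'c set)"
    then show "((\<lambda>p. f (fst p)) has_derivative (\<lambda>v. frechet_derivative f (at (fst x)) (fst v))) (at x)"
      using Suc.prems CkSucD[of n V f "fst x"]
      by (auto intro!: has_derivative_compose[OF has_derivative_fst[OF has_derivative_ident]])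
  next
    fix v :: "'a \<times> 'c" show "Ck n (V \<times> (UNIV::'c set)) (\<lambda>x. frechet_derivative f (at (fst x)) (fst v))"
      using Suc.IH[of "\<lambda>y. frechet_derivative f (at y) (fst v)"] CkSucD2[OF Suc.prems] by simp
  qed
qed

lemma Ck_bounded_linear:
  assumes "open U" "bounded_linear L"
  shows "Ck n U L"
proof (cases n)
  case 0
  then show ?thesis using assms(2) by (simp add: Ck0 linear_continuous_on)
next
  case (Suc m)
  show ?thesis unfolding Suc
  proof (rule CkSucI_deriv[OF assms(1), of _ "\<lambda>x. L"])
    show "(L has_derivative L) (at x)" for x using bounded_linear_imp_has_derivative[OF assms(2)] .
    show "Ck m U (\<lambda>x. L v)" for v by (rule Ck_const)
  qed
qed

definition sm :: "'a::real_normed_vector set \<Rightarrow> ('a \<Rightarrow> 'b::real_normed_vector) \<Rightarrow> bool" where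
  "sm U f \<longleftrightarrow> (\<forall>n. Ck n U f)"

lemma sm_deriv: "sm U f \<Longrightarrow> sm U (\<lambda>x. frechet_derivative f (at x) v)"
  unfolding sm_def using CkSucD2 by blast

lemma sm_cong: "open U \<Longrightarrow> sm U f \<Longrightarrow> (\<forall>x\<in>U. f x = g x) \<Longrightarrow> sm U g"
  unfolding sm_def using Ck_cong by blast
lemma sm_add: "open U \<Longrightarrow> sm U f \<Longrightarrow> sm U g \<Longrightarrow> sm U (\<lambda>x. f x + g x)"
  unfolding sm_def using Ck_add by blast
lemma sm_scaleR: "open U \<Longrightarrow> sm U a \<Longrightarrow> sm U g \<Longrightarrow> sm U (\<lambda>x. a x *\<^sub>R g x)"
  unfolding sm_def using Ck_scaleR by blast
lemma sm_linear: "open U \<Longrightarrow> bounded_linear L \<Longrightarrow> sm U f \<Longrightarrow> sm U (\<lambda>x. L (f x))"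
  unfolding sm_def using Ck_linear by blast
lemma sm_inverse: "open U \<Longrightarrow> sm U a \<Longrightarrow> \<forall>x\<in>U. a x \<noteq> 0 \<Longrightarrow> sm U (\<lambda>x. inverse (a x :: real))"
  unfolding sm_def using Ck_inverse by blast
lemma sm_const: "sm U (\<lambda>x. c)"
  unfolding sm_def using Ck_const by blast
lemma sm_mult: "open U \<Longrightarrow> sm U a \<Longrightarrow> sm U b \<Longrightarrow> sm U (\<lambda>x. a x * b x :: real)"
  using sm_scaleR[of U a b] by simp
lemma sm_minus: "open U \<Longrightarrow> sm U f \<Longrightarrow> sm U (\<lambda>x. - f x)"
  using sm_linear[OF _ bounded_linear_minus[OF bounded_linear_ident]] by blast
lemma sm_diff: "open U \<Longrightarrow> sm U f \<Longrightarrow> sm U g \<Longrightarrow> sm U (\<lambda>x. f x - g x)"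
  using sm_add[of U f "\<lambda>x. - g x"] sm_minus[of U g] by simp
lemma sm_Re: "open U \<Longrightarrow> sm U f \<Longrightarrow> sm U (\<lambda>x. Re (f x))"
  using sm_linear[OF _ bounded_linear_Re] by blast
lemma sm_Im: "open U \<Longrightarrow> sm U f \<Longrightarrow> sm U (\<lambda>x. Im (f x))"
  using sm_linear[OF _ bounded_linear_Im] by blast
lemma sm_mono: "open U' \<Longrightarrow> U' \<subseteq> U \<Longrightarrow> sm U f \<Longrightarrow> sm U' f"
proof -
  assume a: "open U'" "U' \<subseteq> U" "sm U f"
  have "Ck n U f \<Longrightarrow> Ck n U' f" for n
  proof (induction n arbitrary: f)
    case 0 then show ?case using a continuous_on_subset by (auto simp: Ck0)
  next
    case (Suc n) then show ?case using a by (auto simp: Ck.simps(2))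
  qed
  then show ?thesis using a unfolding sm_def by blast
qed

definition cross :: "complex \<Rightarrow> complex \<Rightarrow> real" where
  "cross u v = Re u * Im v - Im u * Re v"

definition Minv :: "complex \<Rightarrow> complex \<Rightarrow> complex \<Rightarrow> complex" where
  "Minv p q y = Complex (cross y q / cross p q) (cross p y / cross p q)"

lemma complex_decomp: "z = Re z *\<^sub>R 1 + Im z *\<^sub>R \<i>"
  by (simp add: complex_eq_iff)

lemma linear_complex_decomp:
  assumes "linear (L :: complex \<Rightarrow> 'b::real_vector)"
  shows "L z = Re z *\<^sub>R L 1 + Im z *\<^sub>R L \<i>"
proof -
  have "L z = L (Re z *\<^sub>R 1 + Im z *\<^sub>R \<i>)" using complex_decomp by metis
  also have "\<dots> = Re z *\<^sub>R L 1 + Im z *\<^sub>R L \<i>"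
    using assms by (simp add: linear_add linear_scale)
  finally show ?thesis .
qed

lemma cross_add_left: "cross (x + y) z = cross x z + cross y z"
  by (simp add: cross_def algebra_simps)
lemma cross_add_right: "cross z (x + y) = cross z x + cross z y"
  by (simp add: cross_def algebra_simps)
lemma cross_scale_left: "cross (a *\<^sub>R x) z = a * cross x z"
  by (simp add: cross_def algebra_simps)
lemma cross_scale_right: "cross z (a *\<^sub>R x) = a * cross z x"
  by (simp add: cross_def algebra_simps)
lemma cross_self: "cross x x = 0"
  by (simp add: cross_def algebra_simps)
lemma cross_anti: "cross x y = - cross y x"
  by (simp add: cross_def algebra_simps)

lemma Minv_comb:
  assumes "cross p q \<noteq> 0"
  shows "Minv p q (a *\<^sub>R p + b *\<^sub>R q) = Complex a b"
proof -
  have "cross (a *\<^sub>R p + b *\<^sub>R q) q = a * cross p q"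
    by (simp add: cross_add_left cross_scale_left cross_self)
  moreover have "cross p (a *\<^sub>R p + b *\<^sub>R q) = b * cross p q"
    by (simp add: cross_add_right cross_scale_right cross_self)
  ultimately show ?thesis using assms by (simp add: Minv_def)
qed

lemma Minv_left:
  assumes "linear T" "cross (T 1) (T \<i>) \<noteq> 0"
  shows "Minv (T 1) (T \<i>) (T h) = h"
  using Minv_comb[OF assms(2), of "Re h" "Im h"] linear_complex_decomp[OF assms(1), of h]
  by (simp add: complex_eq_iff[of "Complex _ _"])

lemma Minv_recomb:
  assumes "cross p q \<noteq> 0"
  shows "Re (Minv p q y) *\<^sub>R p + Im (Minv p q y) *\<^sub>R q = y"
proof -
  have "cross p q *\<^sub>R y = cross y q *\<^sub>R p + cross p y *\<^sub>R q"
    by (simp add: complex_eq_iff cross_def algebra_simps)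
  note h = this
  have "y = inverse (cross p q) *\<^sub>R (cross p q *\<^sub>R y)" using assms by simp
  also have "\<dots> = (cross y q / cross p q) *\<^sub>R p + (cross p y / cross p q) *\<^sub>R q"
    unfolding h scaleR_add_right scaleR_scaleR by (simp add: divide_inverse mult.commute)
  finally have "y = (cross y q / cross p q) *\<^sub>R p + (cross p y / cross p q) *\<^sub>R q" .
  then show ?thesis by (simp add: Minv_def)
qed

lemma Minv_right:
  assumes "linear T" "cross (T 1) (T \<i>) \<noteq> 0"
  shows "T (Minv (T 1) (T \<i>) y) = y"
  using linear_complex_decomp[OF assms(1)] Minv_recomb[OF assms(2)] by metis

lemma bounded_linear_Minv: "bounded_linear (Minv p q)"
proof -
  have "linear (Minv p q)"
    by (rule linearI) (simp_all add: Minv_def cross_def complex_eq_iff algebra_simps diff_divide_distrib add_divide_distrib)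
  then show ?thesis by (simp add: linear_conv_bounded_linear)
qed

lemma sm_Ck: "sm U f \<Longrightarrow> Ck n U f" unfolding sm_def by blast

lemma sm_has_derivative: "sm U f \<Longrightarrow> x \<in> U \<Longrightarrow> (f has_derivative frechet_derivative f (at x)) (at x)"
  using CkSucD[OF sm_Ck[of U f "Suc 0"]] by blast

lemma sm_cross: "open U \<Longrightarrow> sm U a \<Longrightarrow> sm U b \<Longrightarrow> sm U (\<lambda>x. cross (a x) (b x))"
  unfolding cross_def
  by (intro sm_diff sm_mult sm_Re sm_Im) auto

lemma smooth_inv_comp:
  fixes \<Phi> \<Psi> :: "complex \<Rightarrow> complex" and h :: "complex \<Rightarrow> 'b::real_normed_vector"
  assumes W: "open W" and V: "open V" and sP: "sm W \<Phi>"
    and nz: "\<forall>x\<in>W. cross (frechet_derivative \<Phi> (at x) 1) (frechet_derivative \<Phi> (at x) \<i>) \<noteq> 0"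
    and im: "\<Psi> ` V \<subseteq> W" and cP: "continuous_on V \<Psi>"
    and dP: "\<forall>y\<in>V. (\<Psi> has_derivative Minv (frechet_derivative \<Phi> (at (\<Psi> y)) 1) (frechet_derivative \<Phi> (at (\<Psi> y)) \<i>)) (at y)"
    and sh: "sm W h"
  shows "Ck n V (\<lambda>y. h (\<Psi> y))"
  using sh
proof (induction n arbitrary: h)
  case 0
  then show ?case
    using continuous_on_compose2[OF _ cP im, of h] sm_Ck[OF 0, of 0] by (simp add: Ck0)
next
  case (Suc n)
  let ?p = "\<lambda>x. frechet_derivative \<Phi> (at x) 1"
  let ?q = "\<lambda>x. frechet_derivative \<Phi> (at x) \<i>"
  show ?case
  proof (rule CkSucI_deriv[OF V])
    fix y assume y: "y \<in> V"
    then have "\<Psi> y \<in> W" using im by blast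
    show "((\<lambda>y. h (\<Psi> y)) has_derivative (\<lambda>v. frechet_derivative h (at (\<Psi> y)) (Minv (?p (\<Psi> y)) (?q (\<Psi> y)) v))) (at y)"
      using has_derivative_compose[OF dP[rule_format, OF y] sm_has_derivative[OF Suc.prems \<open>\<Psi> y \<in> W\<close>]] .
  next
    fix v
    let ?c = "\<lambda>x. cross (?p x) (?q x)"
    let ?r1 = "\<lambda>x. (Re v * Im (?q x) - Im v * Re (?q x)) * inverse (?c x)"
    let ?r2 = "\<lambda>x. (Re (?p x) * Im v - Im (?p x) * Re v) * inverse (?c x)"
    have sp: "sm W ?p" and sq: "sm W ?q" using sm_deriv[OF sP] by blast+
    have sc: "sm W ?c" by (rule sm_cross[OF W sp sq])
    have sci: "sm W (\<lambda>x. inverse (?c x))" by (rule sm_inverse[OF W sc nz])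
    have sr1: "sm W ?r1"
      by (intro sm_mult[OF W] sm_diff[OF W] sm_Re[OF W] sm_Im[OF W] sq sci sm_const)
    have sr2: "sm W ?r2"
      by (intro sm_mult[OF W] sm_diff[OF W] sm_Re[OF W] sm_Im[OF W] sp sci sm_const)
    have sm1: "sm W (\<lambda>x. ?r1 x *\<^sub>R frechet_derivative h (at x) 1 + ?r2 x *\<^sub>R frechet_derivative h (at x) \<i>)"
      by (intro sm_add[OF W] sm_scaleR[OF W] sr1 sr2 sm_deriv[OF Suc.prems])
    have "sm W (\<lambda>x. frechet_derivative h (at x) (Minv (?p x) (?q x) v))"
    proof (rule sm_cong[OF W sm1], rule ballI)
      fix x assume "x \<in> W"
      have lin: "linear (frechet_derivative h (at x))"
        using has_derivative_linear[OF sm_has_derivative[OF Suc.prems \<open>x \<in> W\<close>]] .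
      have "Re (Minv (?p x) (?q x) v) = ?r1 x" "Im (Minv (?p x) (?q x) v) = ?r2 x"
        by (simp_all add: Minv_def cross_def divide_inverse)
      then show "?r1 x *\<^sub>R frechet_derivative h (at x) 1 + ?r2 x *\<^sub>R frechet_derivative h (at x) \<i> =
          frechet_derivative h (at x) (Minv (?p x) (?q x) v)"
        using linear_complex_decomp[OF lin, of "Minv (?p x) (?q x) v"] by simp
    qed
    from Suc.IH[OF this]
    show "Ck n V (\<lambda>y. frechet_derivative h (at (\<Psi> y)) (Minv (?p (\<Psi> y)) (?q (\<Psi> y)) v))" .
  qed
qed

lemma surj_cross_nz:
  assumes "linear T" "surj T"
  shows "cross (T 1) (T \<i>) \<noteq> 0"
proof
  assume c0: "cross (T 1) (T \<i>) = 0"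
  have dec: "T h = Re h *\<^sub>R T 1 + Im h *\<^sub>R T \<i>" for h using linear_complex_decomp[OF assms(1)] .
  have cp: "cross (T 1) (T h) = 0" for h
    by (subst dec[of h]) (simp add: cross_add_right cross_scale_right cross_self c0)
  have cq: "cross (T \<i>) (T h) = 0" for h
    using c0 cross_anti[of "T 1" "T \<i>"] by (subst dec[of h]) (simp add: cross_add_right cross_scale_right cross_self)
  obtain h1 where h1: "T h1 = 1" using assms(2) by (metis surjD)
  obtain h2 where h2: "T h2 = \<i>" using assms(2) by (metis surjD)
  have "T 1 = 0" using cp[of h1] cp[of h2] unfolding h1 h2 by (simp add: cross_def complex_eq_iff)
  moreover have "T \<i> = 0" using cq[of h1] cq[of h2] unfolding h1 h2 by (simp add: cross_def complex_eq_iff)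
  ultimately have "T h1 = 0" using dec[of h1] by simp
  then show False using h1 by simp
qed

lemma inv_eq_Minv:
  assumes "linear T" "bij T"
  shows "inv T = Minv (T 1) (T \<i>)"
proof
  fix y
  have s: "surj T" using assms(2) bij_is_surj by blast
  have c: "cross (T 1) (T \<i>) \<noteq> 0" using surj_cross_nz[OF assms(1) s] .
  have "T (inv T y) = y" using s by (simp add: surj_f_inv_f)
  then have "Minv (T 1) (T \<i>) (T (inv T y)) = Minv (T 1) (T \<i>) y" by simp
  then show "inv T y = Minv (T 1) (T \<i>) y" using Minv_left[OF assms(1) c] by simp
qed

lemma IFT_C:
  fixes \<Phi> :: "complex \<Rightarrow> complex"
  assumes W: "open W" and C1: "Ck (Suc 0) W \<Phi>" and x0: "x0 \<in> W"
    and nz: "cross (frechet_derivative \<Phi> (at x0) 1) (frechet_derivative \<Phi> (at x0) \<i>) \<noteq> 0"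
  obtains U' V \<Psi> where "open U'" "U' \<subseteq> W" "x0 \<in> U'" "open V" "\<Phi> x0 \<in> V" "homeomorphism U' V \<Phi> \<Psi>"
    "\<forall>y\<in>V. (\<Psi> has_derivative Minv (frechet_derivative \<Phi> (at (\<Psi> y)) 1) (frechet_derivative \<Phi> (at (\<Psi> y)) \<i>)) (at y)"
    "\<forall>x\<in>U'. cross (frechet_derivative \<Phi> (at x) 1) (frechet_derivative \<Phi> (at x) \<i>) \<noteq> 0"
proof -
  define f' where "f' x = Blinfun (frechet_derivative \<Phi> (at x))" for x
  have hd: "(\<Phi> has_derivative frechet_derivative \<Phi> (at x)) (at x)" if "x \<in> W" for x
    using CkSucD[OF C1 that] .
  have ap: "blinfun_apply (f' x) = frechet_derivative \<Phi> (at x)" if "x \<in> W" for x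
    unfolding f'_def using bounded_linear_Blinfun_apply[OF has_derivative_bounded_linear[OF hd[OF that]]] .
  have derf: "(\<Phi> has_derivative blinfun_apply (f' x)) (at x)" if "x \<in> W" for x
    using hd[OF that] ap[OF that] by simp
  have contf: "continuous_on W f'"
  proof (rule continuous_on_blinfun_componentwise)
    fix i :: complex assume "i \<in> Basis"
    have "continuous_on W (\<lambda>x. frechet_derivative \<Phi> (at x) i)"
      using CkSucD2[OF C1, of i] by (simp add: Ck0)
    then show "continuous_on W (\<lambda>x. blinfun_apply (f' x) i)"
      using ap by (simp cong: continuous_on_cong)
  qed
  have lin0: "linear (frechet_derivative \<Phi> (at x0))" using has_derivative_linear[OF hd[OF x0]] .
  define invf where "invf = Blinfun (Minv (frechet_derivative \<Phi> (at x0) 1) (frechet_derivative \<Phi> (at x0) \<i>))"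
  have invf: "invf o\<^sub>L f' x0 = id_blinfun"
  proof (rule blinfun_eqI)
    fix h
    show "blinfun_apply (invf o\<^sub>L f' x0) h = blinfun_apply id_blinfun h"
      unfolding blinfun_apply_blinfun_compose invf_def bounded_linear_Blinfun_apply[OF bounded_linear_Minv] ap[OF x0]
      using Minv_left[OF lin0 nz] by simp
  qed
  obtain U' V g g' where U': "open U'" "U' \<subseteq> W" "x0 \<in> U'" "open V" "\<Phi> x0 \<in> V" "homeomorphism U' V \<Phi> g"
    and dg: "\<And>y. y \<in> V \<Longrightarrow> (g has_derivative (g' y)) (at y)"
    and g': "\<And>y. y \<in> V \<Longrightarrow> g' y = inv (blinfun_apply (f'(g y)))"
    and bj: "\<And>y. y \<in> V \<Longrightarrow> bij (blinfun_apply (f'(g y)))"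
    using inverse_function_theorem[OF W derf contf x0 invf] by blast
  have gW: "g y \<in> W" if "y \<in> V" for y
    using U'(2,6) that homeomorphism_image2 by blast
  have lin: "linear (frechet_derivative \<Phi> (at x))" if "x \<in> W" for x
    using has_derivative_linear[OF hd[OF that]] .
  have D: "\<forall>y\<in>V. (g has_derivative Minv (frechet_derivative \<Phi> (at (g y)) 1) (frechet_derivative \<Phi> (at (g y)) \<i>)) (at y)"
  proof
    fix y assume y: "y \<in> V"
    have "g' y = Minv (frechet_derivative \<Phi> (at (g y)) 1) (frechet_derivative \<Phi> (at (g y)) \<i>)"
      using g'[OF y] bj[OF y] ap[OF gW[OF y]] inv_eq_Minv[OF lin[OF gW[OF y]]] by simp
    then show "(g has_derivative Minv (frechet_derivative \<Phi> (at (g y)) 1) (frechet_derivative \<Phi> (at (g y)) \<i>)) (at y)"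
      using dg[OF y] by simp
  qed
  have N: "\<forall>x\<in>U'. cross (frechet_derivative \<Phi> (at x) 1) (frechet_derivative \<Phi> (at x) \<i>) \<noteq> 0"
  proof
    fix x assume x: "x \<in> U'"
    have y: "\<Phi> x \<in> V" and gx: "g (\<Phi> x) = x" using U'(6) x by (auto simp: homeomorphism_def)
    have "bij (frechet_derivative \<Phi> (at x))" using bj[OF y] ap[OF gW[OF y]] gx by simp
    then show "cross (frechet_derivative \<Phi> (at x) 1) (frechet_derivative \<Phi> (at x) \<i>) \<noteq> 0"
      using surj_cross_nz[OF lin] x U'(2) bij_is_surj by blast
  qed
  show ?thesis using that[OF U' D N] .
qed

locale setting =
  fixes D :: "complex set" and \<gamma> :: "real \<Rightarrow> complex" and F :: "complex \<Rightarrow> complex"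
  assumes conn: "connected D" and sconn: "simply_connected D" and intne: "interior D \<noteq> {}"
    and clo: "closed D" and bdd: "bounded D"
    and curve: "smooth_closed_curve \<gamma>" and fr: "frontier D = \<gamma> ` {0..1}"
    and symp: "symplectomorphism D F" and modr: "moderate D F"
    and fixg: "\<forall>t. F (\<gamma> t) = \<gamma> t"
begin

definition "\<Gamma> = \<gamma> ` {0..1}"
definition "Ins = inside \<Gamma>"
definition "Out = outside \<Gamma>"

lemma sm_gamma: "sm UNIV \<gamma>"
  using curve unfolding smooth_closed_curve_def smooth_open_def sm_def by blast

lemma per1: "\<gamma> (t + 1) = \<gamma> t" using curve unfolding smooth_closed_curve_def by blast

lemma per_int: "\<gamma> (t + of_int k) = \<gamma> t"
proof (induction k arbitrary: t rule: int_induct[where k = 0])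
  case base then show ?case by simp
next
  case (step1 i) then show ?case using per1[of "t + of_int i"] by (simp add: add.assoc)
next
  case (step2 i) then show ?case using per1[of "t + of_int i - 1"] by (simp add: algebra_simps)
qed

lemma inj01: "inj_on \<gamma> {0..<1}" using curve unfolding smooth_closed_curve_def by blast

lemma frac_in: "t - of_int \<lfloor>t\<rfloor> \<in> {0..<1}"
  by (simp add: floor_le_iff) linarith

lemma gamma_frac: "\<gamma> t = \<gamma> (t - of_int \<lfloor>t\<rfloor>)"
  using per_int[of "t - of_int \<lfloor>t\<rfloor>" "\<lfloor>t\<rfloor>"] by simp

lemma gamma_in: "\<gamma> t \<in> \<Gamma>"
  using gamma_frac[of t] frac_in[of t] unfolding \<Gamma>_def by auto

lemma cont_gamma: "continuous_on UNIV \<gamma>"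
  using sm_Ck[OF sm_gamma, of 0] by (simp add: Ck0)

lemma simple: "simple_path \<gamma>"
  unfolding simple_path_def loop_free_def path_def
proof (intro conjI ballI impI)
  show "continuous_on {0..1} \<gamma>" using cont_gamma continuous_on_subset by blast
  fix x y assume x: "x \<in> {0..1::real}" and y: "y \<in> {0..1::real}" and e: "\<gamma> x = \<gamma> y"
  have g10: "\<gamma> 1 = \<gamma> 0" using per1[of 0] by simp
  show "x = y \<or> x = 0 \<and> y = 1 \<or> x = 1 \<and> y = 0"
  proof (cases "x = 1")
    case True
    then show ?thesis
    proof (cases "y = 1")
      case False
      then have "y \<in> {0..<1}" using y by auto
      then have "y = 0" using inj01 e g10 True by (auto simp: inj_on_def)
      then show ?thesis using True by simp
    qed simp
  next
    case False
    then have xx: "x \<in> {0..<1}" using x by auto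
    show ?thesis
    proof (cases "y = 1")
      case True
      then have "x = 0" using inj01 e g10 xx by (auto simp: inj_on_def)
      then show ?thesis using True by simp
    next
      case False
      then have "y \<in> {0..<1}" using y by auto
      then show ?thesis using inj01 e xx by (auto simp: inj_on_def)
    qed
  qed
qed

lemma closed_loop: "pathfinish \<gamma> = pathstart \<gamma>"
  using per1[of 0] by (simp add: pathfinish_def pathstart_def)

lemma path_image_eq: "path_image \<gamma> = \<Gamma>"
  by (simp add: path_image_def \<Gamma>_def)

lemma J: "Ins \<noteq> {} \<and> open Ins \<and> connected Ins \<and> Out \<noteq> {} \<and> open Out \<and> connected Out \<and>
   bounded Ins \<and> \<not> bounded Out \<and> Ins \<inter> Out = {} \<and> Ins \<union> Out = - \<Gamma> \<and> frontier Ins = \<Gamma> \<and> frontier Out = \<Gamma>"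
  using Jordan_inside_outside[OF simple closed_loop] unfolding path_image_eq Ins_def Out_def .

lemma openI: "open Ins" and openO: "open Out" and connI: "connected Ins" and connO: "connected Out"
  and unbO: "\<not> bounded Out" and IO: "Ins \<inter> Out = {}" and IUO: "Ins \<union> Out = - \<Gamma>"
  and frI: "frontier Ins = \<Gamma>" and frO: "frontier Out = \<Gamma>" and Ine: "Ins \<noteq> {}"
  using J by auto

lemma compact_Gamma: "compact \<Gamma>"
  unfolding \<Gamma>_def using compact_continuous_image[OF continuous_on_subset[OF cont_gamma] compact_Icc] by blast

lemma frD: "frontier D = \<Gamma>" using fr unfolding \<Gamma>_def .

lemma intD_I: "interior D = Ins"
proof
  have fi: "frontier (interior D) \<subseteq> \<Gamma>" using frontier_interior_subset frD by blast
  show "interior D \<subseteq> Ins"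
  proof
    fix x assume x: "x \<in> interior D"
    have "x \<notin> \<Gamma>" using x frD unfolding frontier_def by auto
    then have xIO: "x \<in> Ins \<or> x \<in> Out" using IUO by auto
    show "x \<in> Ins"
    proof (rule ccontr)
      assume "x \<notin> Ins"
      then have xO: "x \<in> Out" using xIO by simp
      have "Out - interior D = {}"
      proof (rule ccontr)
        assume ne: "Out - interior D \<noteq> {}"
        have "Out \<inter> frontier (interior D) \<noteq> {}"
          using connected_Int_frontier[OF connO _ ne] xO x by blast
        then show False using fi IUO by auto
      qed
      then have "Out \<subseteq> D" using interior_subset by blast
      then show False using unbO bdd bounded_subset by blast
    qed
  qed
  show "Ins \<subseteq> interior D"
  proof (rule ccontr)
    assume ne: "\<not> Ins \<subseteq> interior D"
    obtain y where "y \<in> interior D" using intne by blast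
    then have "y \<in> Ins" using \<open>interior D \<subseteq> Ins\<close> by blast
    then have "Ins \<inter> frontier (interior D) \<noteq> {}"
      using connected_Int_frontier[OF connI, of "interior D"] ne \<open>y \<in> interior D\<close> by blast
    then show False using fi IUO by auto
  qed
qed

lemma D_eq: "D = Ins \<union> \<Gamma>"
proof -
  have "D = closure D" using clo by simp
  also have "\<dots> = interior D \<union> frontier D"
    using closure_Un_frontier[of D] interior_subset[of D] unfolding frontier_def by auto
  finally show ?thesis using intD_I frD by simp
qed

lemma Gamma_sub_D: "\<Gamma> \<subseteq> D" and I_sub_D: "Ins \<subseteq> D" using D_eq by auto

lemma I_Gamma: "Ins \<inter> \<Gamma> = {}" using IUO by auto

lemma compactD: "compact D" using clo bdd compact_eq_bounded_closed by blast

end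

context setting begin

definition "gd t = vector_derivative \<gamma> (at t)"

lemma gamma_vd: "(\<gamma> has_vector_derivative gd t) (at t)"
  using CkSucD1[OF sm_Ck[OF sm_gamma, of "Suc 0"]] vector_derivative_works unfolding gd_def by blast

lemma gamma_fd: "frechet_derivative \<gamma> (at t) = (\<lambda>x. x *\<^sub>R gd t)"
  using gamma_vd[of t] frechet_derivative_at unfolding has_vector_derivative_def by metis

lemma cont_gd: "continuous_on UNIV gd"
proof -
  have "Ck 0 UNIV (\<lambda>t. frechet_derivative \<gamma> (at t) 1)"
    using CkSucD2[OF sm_Ck[OF sm_gamma, of "Suc 0"]] .
  then show ?thesis by (simp add: Ck0 gamma_fd)
qed

lemma gd_nz: "gd t \<noteq> 0"
  using curve unfolding smooth_closed_curve_def gd_def by blast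

lemma cross_i: "cross c (\<i> * c) = (norm c)^2"
  unfolding cmod_power2 by (simp add: cross_def power2_eq_square)

lemma half_segment:
  assumes z0: "z0 = \<gamma> t0"
  shows "\<exists>\<rho>>0. \<exists>\<sigma>::real. (\<sigma> = 1 \<or> \<sigma> = -1) \<and>
           (\<forall>s\<in>{0<..<\<rho>}. z0 + complex_of_real (\<sigma> * s) * (\<i> * gd t0) \<in> Ins)"
proof -
  define c where "c = gd t0"
  define n where "n = \<i> * c"
  define H where "H w = \<gamma> (t0 + Re w) + complex_of_real (Im w) * n" for w
  define DH where "DH w h = Re h *\<^sub>R gd (t0 + Re w) + complex_of_real (Im h) * n" for w h
  have blI: "bounded_linear (\<lambda>w. complex_of_real (Im w) * n)"
  proof -
    have "linear (\<lambda>w. complex_of_real (Im w) * n)"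
      by (rule linearI) (simp_all add: algebra_simps scaleR_conv_of_real)
    then show ?thesis by (simp add: linear_conv_bounded_linear)
  qed
  have dH: "(H has_derivative DH w) (at w)" for w
  proof -
    have d1: "((\<lambda>w. t0 + Re w) has_derivative (\<lambda>h. Re h)) (at w)"
      by (auto intro!: derivative_eq_intros)
    have d2: "(\<gamma> has_derivative (\<lambda>x. x *\<^sub>R gd (t0 + Re w))) (at (t0 + Re w))"
      using gamma_vd unfolding has_vector_derivative_def .
    have d3: "((\<lambda>w. \<gamma> (t0 + Re w)) has_derivative (\<lambda>h. Re h *\<^sub>R gd (t0 + Re w))) (at w)"
      using has_derivative_compose[OF d1 d2] .
    have d4: "((\<lambda>w. complex_of_real (Im w) * n) has_derivative (\<lambda>h. complex_of_real (Im h) * n)) (at w)"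
      using bounded_linear_imp_has_derivative[OF blI] .
    show ?thesis unfolding H_def DH_def using has_derivative_add[OF d3 d4] .
  qed
  have cgd2: "continuous_on UNIV (\<lambda>w. gd (t0 + Re w))"
    by (rule continuous_on_compose2[OF cont_gd]) (auto intro!: continuous_intros)
  have C1: "Ck (Suc 0) UNIV H"
  proof (rule CkSucI_deriv[where D = DH])
    fix v
    show "Ck 0 UNIV (\<lambda>x. DH x v)" unfolding Ck0 DH_def
      by (intro continuous_on_add continuous_on_scaleR continuous_on_const cgd2)
  qed (use dH in auto)
  have fdH: "frechet_derivative H (at w) = DH w" for w using frechet_derivative_at[OF dH] by simp
  have cnz: "c \<noteq> 0" using gd_nz c_def by simp
  have nz0: "cross (frechet_derivative H (at 0) 1) (frechet_derivative H (at 0) \<i>) \<noteq> 0"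
    unfolding fdH DH_def n_def using cnz cross_i[of c] c_def by simp
  obtain U' V \<Psi> where U': "open U'" "U' \<subseteq> UNIV" "0 \<in> U'" "open V" "H 0 \<in> V" and hom: "homeomorphism U' V H \<Psi>"
    and "\<forall>y\<in>V. (\<Psi> has_derivative Minv (frechet_derivative H (at (\<Psi> y)) 1) (frechet_derivative H (at (\<Psi> y)) \<i>)) (at y)"
    and "\<forall>x\<in>U'. cross (frechet_derivative H (at x) 1) (frechet_derivative H (at x) \<i>) \<noteq> 0"
    by (rule IFT_C[OF open_UNIV C1 UNIV_I nz0])
  have injU: "inj_on H U'" using hom by (metis homeomorphism_apply1 inj_on_inverseI)
  obtain r where r: "r > 0" "ball 0 r \<subseteq> U'" using U' open_contains_ball by blast
  define a where "a = min (r/2) (1/4)"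
  have a: "a > 0" "a \<le> r/2" "a \<le> 1/4" using r by (auto simp: a_def)
  define K where "K = \<gamma> ` {t0 + a .. t0 + 1 - a}"
  have cK: "compact K" unfolding K_def
    using compact_continuous_image[OF continuous_on_subset[OF cont_gamma] compact_Icc] by blast
  have z0K: "z0 \<notin> K"
  proof
    assume "z0 \<in> K"
    then obtain s where s: "s \<in> {t0 + a .. t0 + 1 - a}" "\<gamma> s = \<gamma> t0" using z0 K_def by auto
    have e: "\<gamma> (s - of_int \<lfloor>s\<rfloor>) = \<gamma> (t0 - of_int \<lfloor>t0\<rfloor>)" using s(2) gamma_frac by metis
    have "s - of_int \<lfloor>s\<rfloor> = t0 - of_int \<lfloor>t0\<rfloor>"
      using inj01 frac_in[of s] frac_in[of t0] e unfolding inj_on_def by blast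
    then have "s - t0 = of_int (\<lfloor>s\<rfloor> - \<lfloor>t0\<rfloor>)" by simp
    moreover have "0 < s - t0" "s - t0 < 1" using s(1) a by auto
    ultimately show False
      by (metis of_int_0_less_iff of_int_less_1_iff zero_less_imp_eq_int int_one_le_iff_zero_less less_le_not_le of_int_1_le_iff)
  qed
  obtain e where e: "e > 0" "ball z0 e \<subseteq> - K"
    using cK z0K compact_imp_closed open_contains_ball[of "- K"] by (metis ComplI open_Compl)
  have cH: "continuous_on UNIV H" using dH
    by (meson continuous_at_imp_continuous_on has_derivative_continuous)
  have H0: "H 0 = z0" unfolding H_def z0 by simp
  obtain \<rho>0 where \<rho>0: "\<rho>0 > 0" "\<And>w. dist w 0 < \<rho>0 \<Longrightarrow> dist (H w) (H 0) < e"
    using cH e(1) unfolding continuous_on_eq_continuous_at[OF open_UNIV] continuous_at_eps_delta by blast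
  define \<rho> where "\<rho> = min \<rho>0 a"
  have \<rho>: "\<rho> > 0" "\<rho> \<le> a" "\<rho> \<le> \<rho>0" using \<rho>0 a by (auto simp: \<rho>_def)
  have key: "Im w = 0" if w: "norm w < \<rho>" "H w \<in> \<Gamma>" for w
  proof -
    obtain s where s: "s \<in> {0..1}" "H w = \<gamma> s" using w(2) \<Gamma>_def by auto
    define s' where "s' = s - of_int \<lfloor>s - (t0 - a)\<rfloor>"
    have s'r: "t0 - a \<le> s'" "s' < t0 - a + 1" unfolding s'_def by linarith+
    have gs': "\<gamma> s' = \<gamma> s" unfolding s'_def using per_int[of "s - of_int \<lfloor>s - (t0 - a)\<rfloor>" "\<lfloor>s - (t0 - a)\<rfloor>"] by simp
    have "H w \<in> ball z0 e" using \<rho>0(2)[of w] w(1) \<rho> H0 by (simp add: dist_commute dist_norm)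
    then have "H w \<notin> K" using e(2) by blast
    then have "s' < t0 + a" using s'r gs' s(2) unfolding K_def by (metis atLeastAtMost_iff image_eqI linorder_not_le add.commute diff_add_eq le_less)
    then have as: "\<bar>s' - t0\<bar> \<le> a" using s'r by auto
    have "H (complex_of_real (s' - t0)) = \<gamma> s'" unfolding H_def by simp
    then have Hs': "H (complex_of_real (s' - t0)) = H w" using gs' s(2) by simp
    have "norm (complex_of_real (s' - t0)) < r" using as a r(1) by (simp only: norm_of_real)
    then have "complex_of_real (s' - t0) \<in> U'" using r(2) by (auto simp: dist_norm simp del: of_real_diff)
    moreover have "w \<in> U'" using r(2) w(1) \<rho> a by (auto simp: dist_norm)
    ultimately have "w = complex_of_real (s' - t0)" using injU Hs' by (auto simp: inj_on_def)
    then show ?thesis by simp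
  qed
  define B where "B = ball (0::complex) \<rho>"
  have BU: "B \<subseteq> U'" using r \<rho> a by (auto simp: B_def)
  have oHB: "open (H ` B)"
    using invariance_of_domain[OF continuous_on_subset[OF cH] open_ball inj_on_subset[OF injU BU[unfolded B_def]]]
    unfolding B_def by simp
  have z0HB: "z0 \<in> H ` B" using H0 \<rho> by (auto simp: B_def)
  have "z0 \<in> closure Ins" using frI z0 gamma_in unfolding frontier_def by auto
  then have "H ` B \<inter> Ins \<noteq> {}" using open_Int_closure_eq_empty[OF oHB, of Ins] z0HB by auto
  then obtain w where w: "w \<in> B" "H w \<in> Ins" by auto
  have "Im w \<noteq> 0"
  proof
    assume "Im w = 0"
    then have "H w = \<gamma> (t0 + Re w)" unfolding H_def by simp
    then show False using w(2) gamma_in I_Gamma by auto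
  qed
  have side: "H ` (B \<inter> {x. \<sigma> * Im x > 0}) \<subseteq> Ins" if sw: "\<sigma> * Im w > 0" for \<sigma> :: real
  proof -
    have cv: "convex (B \<inter> {x. \<sigma> * Im x > 0})"
    proof -
      have "convex {x::complex. inner (complex_of_real \<sigma> * \<i>) x > 0}" by (rule convex_halfspace_gt)
      moreover have "inner (complex_of_real \<sigma> * \<i>) x = \<sigma> * Im x" for x by (simp add: inner_complex_def)
      ultimately show ?thesis unfolding B_def by (intro convex_Int convex_ball) simp
    qed
    have cn: "connected (H ` (B \<inter> {x. \<sigma> * Im x > 0}))"
      by (rule connected_continuous_image[OF continuous_on_subset[OF cH] convex_connected[OF cv]]) simp
    have sub: "H ` (B \<inter> {x. \<sigma> * Im x > 0}) \<subseteq> Ins \<union> Out"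
    proof
      fix y assume "y \<in> H ` (B \<inter> {x. \<sigma> * Im x > 0})"
      then obtain x where x: "x \<in> B" "\<sigma> * Im x > 0" "y = H x" by auto
      have "Im x \<noteq> 0" using x(2) by auto
      then have "H x \<notin> \<Gamma>" using key[of x] x(1) by (auto simp: B_def)
      then show "y \<in> Ins \<union> Out" using IUO x(3) by auto
    qed
    have "Ins \<inter> H ` (B \<inter> {x. \<sigma> * Im x > 0}) \<noteq> {}" using w sw by auto
    then have "Out \<inter> H ` (B \<inter> {x. \<sigma> * Im x > 0}) = {}"
      using connectedD[OF cn openI openO _ sub] IO by blast
    then show ?thesis using sub by blast
  qed
  have fin: "\<forall>s\<in>{0<..<\<rho>}. z0 + complex_of_real (\<sigma> * s) * (\<i> * gd t0) \<in> Ins" if sw: "\<sigma> * Im w > 0" "\<sigma> = 1 \<or> \<sigma> = -1" for \<sigma> :: real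
  proof
    fix s assume s: "s \<in> {0<..<\<rho>}"
    let ?x = "\<i> * complex_of_real (\<sigma> * s)"
    have "?x \<in> B \<inter> {x. \<sigma> * Im x > 0}" using s sw(2) by (auto simp: B_def norm_mult)
    then have "H ?x \<in> Ins" using side[OF sw(1)] by blast
    moreover have "H ?x = z0 + complex_of_real (\<sigma> * s) * (\<i> * gd t0)"
      unfolding H_def z0 n_def c_def by simp
    ultimately show "z0 + complex_of_real (\<sigma> * s) * (\<i> * gd t0) \<in> Ins" by simp
  qed
  show ?thesis
  proof (cases "Im w > 0")
    case True
    then have "(1::real) * Im w > 0" by simp
    from fin[OF this] have "\<forall>s\<in>{0<..<\<rho>}. z0 + complex_of_real (1 * s) * (\<i> * gd t0) \<in> Ins" by simp
    then show ?thesis using \<rho>(1) by blast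
  next
    case False
    then have "(-1) * Im w > 0" using \<open>Im w \<noteq> 0\<close> by simp
    from fin[OF this] have "\<forall>s\<in>{0<..<\<rho>}. z0 + complex_of_real ((-1) * s) * (\<i> * gd t0) \<in> Ins" by simp
    then show ?thesis using \<rho>(1) by blast
  qed
qed

end

lemma dir_deriv_eq:
  fixes f :: "complex \<Rightarrow> complex"
  assumes L1: "(f has_derivative L1) (at x within S)" and L2: "(f has_derivative L2) (at x within S)"
    and d: "\<delta> > 0" and pS: "\<forall>s\<in>{0<..<\<delta>}. p s \<in> S" and p0: "p 0 = x"
    and pv: "(p has_vector_derivative v) (at 0 within {0<..<\<delta>})"
  shows "L1 v = L2 v"
proof -
  have sub: "p ` {0<..<\<delta>} \<subseteq> S" using pS by auto
  have comp: "((f \<circ> p) has_vector_derivative L v) (at 0 within {0<..<\<delta>})"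
    if L: "(f has_derivative L) (at x within S)" for L
  proof -
    have lin: "linear L" using has_derivative_linear[OF L] .
    have "(f has_derivative L) (at (p 0) within p ` {0<..<\<delta>})"
      using has_derivative_subset[OF L sub] p0 by simp
    from diff_chain_within[OF pv[unfolded has_vector_derivative_def] this]
    have "((f \<circ> p) has_derivative (L \<circ> (\<lambda>t. t *\<^sub>R v))) (at 0 within {0<..<\<delta>})" .
    moreover have "(L \<circ> (\<lambda>t. t *\<^sub>R v)) = (\<lambda>t. t *\<^sub>R L v)"
      using lin by (auto simp: linear_scale)
    ultimately show ?thesis unfolding has_vector_derivative_def by simp
  qed
  have nb: "at 0 within {0<..<\<delta>} \<noteq> bot"
    using trivial_limit_within islimpt_greaterThanLessThan1[OF d] by blast
  show ?thesis using vector_derivative_unique_within[OF nb comp[OF L1] comp[OF L2]] .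
qed

lemma lin_eq2:
  fixes L1 L2 :: "complex \<Rightarrow> complex"
  assumes "linear L1" "linear L2" "c \<noteq> 0" "L1 c = L2 c" "L1 (\<i> * c) = L2 (\<i> * c)"
  shows "L1 = L2"
proof
  fix h
  have h: "h = Re (h / c) *\<^sub>R c + Im (h / c) *\<^sub>R (\<i> * c)"
  proof -
    have "h = (h / c) * c" using assms(3) by simp
    also have "\<dots> = Re (h / c) *\<^sub>R c + Im (h / c) *\<^sub>R (\<i> * c)"
      by (subst complex_eq[of "h / c"]) (simp add: scaleR_conv_of_real algebra_simps)
    finally show ?thesis .
  qed
  show "L1 h = L2 h"
    by (subst h, subst (2) h) (simp add: linear_add[OF assms(1)] linear_add[OF assms(2)]
        linear_scale[OF assms(1)] linear_scale[OF assms(2)] assms(4,5))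
qed

lemma line_vd: "((\<lambda>s. z + complex_of_real (\<sigma> * s) * w) has_vector_derivative (complex_of_real \<sigma> * w)) (at t within T)"
proof -
  have "((\<lambda>s. z + complex_of_real (\<sigma> * s) * w) has_derivative (\<lambda>t. t *\<^sub>R (complex_of_real \<sigma> * w))) (at t within T)"
    by (auto intro!: derivative_eq_intros simp: scaleR_conv_of_real)
  then show ?thesis unfolding has_vector_derivative_def .
qed

context setting begin

lemma deriv_unique:
  assumes z0: "z0 \<in> D" and L1: "(F has_derivative L1) (at z0 within D)" and L2: "(F has_derivative L2) (at z0 within D)"
  shows "L1 = L2"
proof -
  have lin1: "linear L1" and lin2: "linear L2" using has_derivative_linear L1 L2 by blast+
  show ?thesis
  proof (cases "z0 \<in> Ins")
    case True
    obtain \<epsilon> where \<epsilon>: "\<epsilon> > 0" "ball z0 \<epsilon> \<subseteq> Ins" using True openI open_contains_ball by blast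
    have dirw: "L1 w = L2 w" if w: "norm w = 1" for w
    proof (rule dir_deriv_eq[OF L1 L2 \<epsilon>(1)])
      show "\<forall>s\<in>{0<..<\<epsilon>}. z0 + complex_of_real (1 * s) * w \<in> D"
      proof
        fix s assume s: "s \<in> {0<..<\<epsilon>}"
        have "z0 + complex_of_real (1 * s) * w \<in> ball z0 \<epsilon>" using s w by (simp add: dist_norm norm_mult)
        then show "z0 + complex_of_real (1 * s) * w \<in> D" using \<epsilon>(2) I_sub_D by blast
      qed
      show "(\<lambda>s. z0 + complex_of_real (1 * s) * w) 0 = z0" by simp
      show "((\<lambda>s. z0 + complex_of_real (1 * s) * w) has_vector_derivative w) (at 0 within {0<..<\<epsilon>})"
        using line_vd[of z0 1 w] by simp
    qed
    show ?thesis by (rule lin_eq2[OF lin1 lin2, of 1]) (use dirw in auto)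
  next
    case False
    then have "z0 \<in> \<Gamma>" using z0 D_eq by auto
    then obtain t0 where t0: "z0 = \<gamma> t0" unfolding \<Gamma>_def by auto
    obtain \<rho> \<sigma> where \<rho>: "\<rho> > 0" and \<sigma>: "\<sigma> = 1 \<or> \<sigma> = -1"
      and hs: "\<forall>s\<in>{0<..<\<rho>}. z0 + complex_of_real (\<sigma> * s) * (\<i> * gd t0) \<in> Ins"
      using half_segment[OF t0] by blast
    have e1: "L1 (gd t0) = L2 (gd t0)"
    proof (rule dir_deriv_eq[OF L1 L2 zero_less_one])
      show "\<forall>s\<in>{0<..<1}. \<gamma> (t0 + s) \<in> D" using gamma_in Gamma_sub_D by blast
      show "\<gamma> (t0 + 0) = z0" using t0 by simp
      have a: "((\<lambda>s. t0 + s) has_vector_derivative 1) (at 0 within {0<..<1})"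
        by (auto intro!: derivative_eq_intros simp: has_vector_derivative_def)
      have b: "(\<gamma> has_vector_derivative gd t0) (at ((\<lambda>s. t0 + s) 0) within (\<lambda>s. t0 + s) ` {0<..<1})"
        using has_vector_derivative_at_within[OF gamma_vd[of t0]] by simp
      show "((\<lambda>s. \<gamma> (t0 + s)) has_vector_derivative gd t0) (at 0 within {0<..<1})"
        using vector_diff_chain_within[OF a b] by (simp add: o_def)
    qed
    have e2: "L1 (complex_of_real \<sigma> * (\<i> * gd t0)) = L2 (complex_of_real \<sigma> * (\<i> * gd t0))"
    proof (rule dir_deriv_eq[OF L1 L2 \<rho>])
      show "\<forall>s\<in>{0<..<\<rho>}. z0 + complex_of_real (\<sigma> * s) * (\<i> * gd t0) \<in> D" using hs I_sub_D by blast
      show "(\<lambda>s. z0 + complex_of_real (\<sigma> * s) * (\<i> * gd t0)) 0 = z0" by simp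
      show "((\<lambda>s. z0 + complex_of_real (\<sigma> * s) * (\<i> * gd t0)) has_vector_derivative complex_of_real \<sigma> * (\<i> * gd t0)) (at 0 within {0<..<\<rho>})"
        by (rule line_vd)
    qed
    have "L1 (\<i> * gd t0) = L2 (\<i> * gd t0)"
    proof -
      have "\<sigma> *\<^sub>R L1 (\<i> * gd t0) = \<sigma> *\<^sub>R L2 (\<i> * gd t0)"
        using e2 by (simp add: scaleR_conv_of_real[symmetric] linear_scale[OF lin1] linear_scale[OF lin2])
      then show ?thesis using \<sigma> by auto
    qed
    then show ?thesis using lin_eq2[OF lin1 lin2 gd_nz e1] by blast
  qed
qed

lemma smF: "smooth_on_set D F"
  using symp unfolding symplectomorphism_def diffeomorphism_onto_def by blast

lemma ext_at:
  assumes "z0 \<in> D"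
  obtains U0 G where "open U0" "z0 \<in> U0" "sm U0 G" "\<forall>y\<in>D \<inter> U0. G y = F y"
  using smF assms unfolding smooth_on_set_def smooth_open_def sm_def by blast

lemma fd_eq:
  assumes z0: "z0 \<in> D" "z0 \<in> U0" and U0: "open U0" and G: "sm U0 G" "\<forall>y\<in>D \<inter> U0. G y = F y"
  shows "frechet_derivative F (at z0 within D) = frechet_derivative G (at z0)"
proof -
  obtain d where d: "d > 0" "ball z0 d \<subseteq> U0" using U0 z0(2) open_contains_ball by blast
  have "(G has_derivative frechet_derivative G (at z0)) (at z0 within D)"
    using has_derivative_at_withinI[OF sm_has_derivative[OF G(1) z0(2)]] .
  then have dF: "(F has_derivative frechet_derivative G (at z0)) (at z0 within D)"
    by (rule has_derivative_transform_within[OF _ d(1) z0(1)]) (metis IntI G(2) d(2) mem_ball dist_commute subsetD)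
  then have "F differentiable (at z0 within D)" by (auto simp: differentiable_def)
  then have "(F has_derivative frechet_derivative F (at z0 within D)) (at z0 within D)"
    using frechet_derivative_works by blast
  then show ?thesis using deriv_unique[OF z0(1) _ dF] by blast
qed

lemma jac_mod_at:
  assumes "z0 \<in> D" "z0 \<in> U0" "open U0" "sm U0 G" "\<forall>y\<in>D \<inter> U0. G y = F y"
  shows "cross (frechet_derivative G (at z0) 1) (frechet_derivative G (at z0) \<i>) = 1"
    and "2 + Re (frechet_derivative G (at z0) 1) + Im (frechet_derivative G (at z0) \<i>) \<noteq> 0"
proof -
  have e: "frechet_derivative F (at z0 within D) = frechet_derivative G (at z0)" using fd_eq assms by blast
  show "cross (frechet_derivative G (at z0) 1) (frechet_derivative G (at z0) \<i>) = 1"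
    using symp assms(1) e unfolding symplectomorphism_def jac_det_def cross_def Let_def by auto
  show "2 + Re (frechet_derivative G (at z0) 1) + Im (frechet_derivative G (at z0) \<i>) \<noteq> 0"
    using modr assms(1) e unfolding moderate_def Let_def by auto
qed

end

lemma bl_half: "bounded_linear (\<lambda>w::complex. w / 2)"
  by (rule bounded_linear_divide)

lemma sm_id: "open U \<Longrightarrow> sm U (\<lambda>x. x)"
  unfolding sm_def using Ck_bounded_linear[OF _ bounded_linear_ident] by blast

lemma cross_half:
  "cross ((1 + p) / 2) ((\<i> + q) / 2) = (1 + Re p + Im q + cross p q) / 4"
  by (simp add: cross_def field_simps)

context setting begin

definition "\<phi> z = (z + F z) / 2"

lemma LOC:
  assumes z0: "z0 \<in> D"
  obtains U0 G U' V \<Psi> where "open U0" "z0 \<in> U0" "sm U0 G" "\<forall>y\<in>D \<inter> U0. G y = F y"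
    "open U'" "U' \<subseteq> U0" "z0 \<in> U'" "open V" "(z0 + G z0) / 2 \<in> V"
    "homeomorphism U' V (\<lambda>z. (z + G z) / 2) \<Psi>" "sm V \<Psi>" "sm V (\<lambda>y. G (\<Psi> y))"
proof -
  obtain U0 G where U0: "open U0" "z0 \<in> U0" and G: "sm U0 G" "\<forall>y\<in>D \<inter> U0. G y = F y"
    using ext_at[OF z0] by blast
  define \<Phi> where "\<Phi> = (\<lambda>z. (z + G z) / 2)"
  have sP: "sm U0 \<Phi>" unfolding \<Phi>_def
    using sm_linear[OF U0(1) bl_half sm_add[OF U0(1) sm_id[OF U0(1)] G(1)]] .
  define A where "A = frechet_derivative G (at z0)"
  have dP: "(\<Phi> has_derivative (\<lambda>h. (h + A h) / 2)) (at z0)"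
    unfolding \<Phi>_def A_def
    using bounded_linear.has_derivative[OF bl_half has_derivative_add[OF has_derivative_ident sm_has_derivative[OF G(1) U0(2)]]] .
  have fdP: "frechet_derivative \<Phi> (at z0) = (\<lambda>h. (h + A h) / 2)" using frechet_derivative_at[OF dP] by simp
  have jm: "cross (A 1) (A \<i>) = 1" "2 + Re (A 1) + Im (A \<i>) \<noteq> 0"
    using jac_mod_at[OF z0 U0(2) U0(1) G] unfolding A_def by auto
  have nz: "cross (frechet_derivative \<Phi> (at z0) 1) (frechet_derivative \<Phi> (at z0) \<i>) \<noteq> 0"
    unfolding fdP cross_half using jm by simp
  obtain U' V \<Psi> where U': "open U'" "U' \<subseteq> U0" "z0 \<in> U'" "open V" "\<Phi> z0 \<in> V" and hom: "homeomorphism U' V \<Phi> \<Psi>"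
    and dPsi: "\<forall>y\<in>V. (\<Psi> has_derivative Minv (frechet_derivative \<Phi> (at (\<Psi> y)) 1) (frechet_derivative \<Phi> (at (\<Psi> y)) \<i>)) (at y)"
    and nzU: "\<forall>x\<in>U'. cross (frechet_derivative \<Phi> (at x) 1) (frechet_derivative \<Phi> (at x) \<i>) \<noteq> 0"
    by (rule IFT_C[OF U0(1) sm_Ck[OF sP] U0(2) nz])
  have sPU: "sm U' \<Phi>" using sm_mono[OF U'(1,2) sP] .
  have im: "\<Psi> ` V \<subseteq> U'" using homeomorphism_image2[OF hom] by simp
  have cPsi: "continuous_on V \<Psi>" using homeomorphism_cont2[OF hom] .
  have s1: "sm V \<Psi>"
    unfolding sm_def using smooth_inv_comp[OF U'(1) U'(4) sPU nzU im cPsi dPsi sm_id[OF U'(1)]] by simp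
  have s2: "sm V (\<lambda>y. G (\<Psi> y))"
    unfolding sm_def using smooth_inv_comp[OF U'(1) U'(4) sPU nzU im cPsi dPsi sm_mono[OF U'(1,2) G(1)]] by simp
  show ?thesis using that[OF U0 G U'(1-4) _ _ s1 s2] U'(5) hom unfolding \<Phi>_def by blast
qed

lemma cont_F: "continuous_on D F"
proof -
  have "continuous (at z0 within D) F" if z0: "z0 \<in> D" for z0
  proof -
    obtain U0 G where U0: "open U0" "z0 \<in> U0" and G: "sm U0 G" "\<forall>y\<in>D \<inter> U0. G y = F y"
      using ext_at[OF z0] by blast
    obtain d where d: "d > 0" "ball z0 d \<subseteq> U0" using U0 open_contains_ball by blast
    have "continuous (at z0 within D) G"
      using has_derivative_continuous[OF has_derivative_at_withinI[OF sm_has_derivative[OF G(1) U0(2)]]] .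
    then show ?thesis
      by (rule continuous_transform_within[OF _ d(1) z0]) (metis IntI G(2) d(2) mem_ball dist_commute subsetD)
  qed
  then show ?thesis using continuous_on_eq_continuous_within by blast
qed

lemma cont_phi: "continuous_on D \<phi>"
  unfolding \<phi>_def[abs_def] by (intro continuous_intros cont_F) simp

lemma phi_Gamma: "z \<in> \<Gamma> \<Longrightarrow> \<phi> z = z"
  using fixg unfolding \<phi>_def \<Gamma>_def by auto

lemma loc_inj:
  assumes "z0 \<in> D"
  shows "\<exists>N. open N \<and> z0 \<in> N \<and> inj_on \<phi> (N \<inter> D)"
proof -
  obtain U0 G U' V \<Psi> where U0: "open U0" "z0 \<in> U0" "sm U0 G" "\<forall>y\<in>D \<inter> U0. G y = F y"
    and U': "open U'" "U' \<subseteq> U0" "z0 \<in> U'" "open V" "(z0 + G z0) / 2 \<in> V"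
    and hom: "homeomorphism U' V (\<lambda>z. (z + G z) / 2) \<Psi>" and "sm V \<Psi>" "sm V (\<lambda>y. G (\<Psi> y))"
    by (rule LOC[OF assms])
  have "inj_on (\<lambda>z. (z + G z) / 2) U'"
    by (rule inj_on_inverseI[where g = \<Psi>]) (rule homeomorphism_apply1[OF hom])
  then have "inj_on (\<lambda>z. (z + G z) / 2) (U' \<inter> D)" by (rule inj_on_subset) auto
  moreover have "\<forall>z\<in>U' \<inter> D. (z + G z) / 2 = \<phi> z" using U0(4) U'(2) unfolding \<phi>_def by auto
  moreover have "inj_on (\<lambda>z. (z + G z) / 2) (U' \<inter> D) = inj_on \<phi> (U' \<inter> D)"
    by (rule inj_on_cong) (use calculation(2) in blast)
  ultimately have "inj_on \<phi> (U' \<inter> D)" by simp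
  then show ?thesis using U' by blast
qed

lemma open_map:
  assumes N: "open N" "N \<subseteq> Ins"
  shows "open (\<phi> ` N)"
  unfolding open_subopen[of "\<phi> ` N"]
proof
  fix y assume "y \<in> \<phi> ` N"
  then obtain z where z: "z \<in> N" "y = \<phi> z" by auto
  then have zD: "z \<in> D" using N I_sub_D by auto
  obtain M where M: "open M" "z \<in> M" "inj_on \<phi> (M \<inter> D)" using loc_inj[OF zD] by blast
  have sub: "M \<inter> N \<subseteq> D" using N I_sub_D by auto
  have inj: "inj_on \<phi> (M \<inter> N)" using inj_on_subset[OF M(3)] sub by blast
  have "open (\<phi> ` (M \<inter> N))"
    using invariance_of_domain[OF continuous_on_subset[OF cont_phi sub] open_Int[OF M(1) N(1)] inj] .
  then show "\<exists>T. open T \<and> y \<in> T \<and> T \<subseteq> \<phi> ` N" using z M by blast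
qed

lemma phiD_compact: "compact (\<phi> ` D)"
  using compact_continuous_image[OF cont_phi compactD] .

lemma fr_phiD: "frontier (\<phi> ` D) \<subseteq> \<Gamma>"
proof
  fix w assume w: "w \<in> frontier (\<phi> ` D)"
  have "closure (\<phi> ` D) = \<phi> ` D" using phiD_compact compact_imp_closed closure_closed by blast
  then have wD: "w \<in> \<phi> ` D" using w unfolding frontier_def by auto
  have "\<phi> ` Ins \<subseteq> interior (\<phi> ` D)"
    using interior_maximal[OF image_mono[OF I_sub_D] open_map[OF openI order_refl]] .
  then have "w \<notin> \<phi> ` Ins" using w unfolding frontier_def by auto
  then obtain z where "z \<in> D" "z \<notin> Ins" "w = \<phi> z" using wD by auto
  then show "w \<in> \<Gamma>" using D_eq phi_Gamma by auto
qed

lemma Out_phiD: "Out \<inter> \<phi> ` D = {}"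
proof (rule ccontr)
  assume ne: "Out \<inter> \<phi> ` D \<noteq> {}"
  have "Out - \<phi> ` D \<noteq> {}"
  proof
    assume "Out - \<phi> ` D = {}"
    then have "Out \<subseteq> \<phi> ` D" by blast
    then show False using unbO bounded_subset compact_imp_bounded[OF phiD_compact] by blast
  qed
  then have "Out \<inter> frontier (\<phi> ` D) \<noteq> {}" using connected_Int_frontier[OF connO ne] by blast
  then show False using fr_phiD IUO by auto
qed

lemma phi_Ins: "\<phi> ` Ins \<subseteq> Ins"
proof
  fix w assume "w \<in> \<phi> ` Ins"
  then have wD: "w \<in> \<phi> ` D" using I_sub_D by blast
  then have "w \<notin> Out" using Out_phiD by blast
  moreover have "w \<notin> \<Gamma>"
  proof
    assume "w \<in> \<Gamma>"
    then have "w \<in> closure Out" using frO unfolding frontier_def by auto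
    moreover have "open (\<phi> ` Ins)" using open_map[OF openI order_refl] .
    ultimately have "\<phi> ` Ins \<inter> Out \<noteq> {}"
      using open_Int_closure_eq_empty[of "\<phi> ` Ins" Out] \<open>w \<in> \<phi> ` Ins\<close> by blast
    then show False using Out_phiD I_sub_D by blast
  qed
  ultimately show "w \<in> Ins" using IUO by auto
qed

lemma Ins_sub_phiD: "Ins \<subseteq> \<phi> ` D"
proof (rule ccontr)
  assume ne: "\<not> Ins \<subseteq> \<phi> ` D"
  obtain z where "z \<in> Ins" using Ine by blast
  then have "\<phi> z \<in> Ins \<inter> \<phi> ` D" using phi_Ins I_sub_D by blast
  then have "Ins \<inter> frontier (\<phi> ` D) \<noteq> {}" using connected_Int_frontier[OF connI, of "\<phi> ` D"] ne by blast
  then show False using fr_phiD I_Gamma by blast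
qed

lemma phi_Ins_eq: "\<phi> ` Ins = Ins"
proof
  show "\<phi> ` Ins \<subseteq> Ins" by (rule phi_Ins)
  show "Ins \<subseteq> \<phi> ` Ins"
  proof
    fix w assume w: "w \<in> Ins"
    then obtain z where z: "z \<in> D" "w = \<phi> z" using Ins_sub_phiD by blast
    have "z \<notin> \<Gamma>" using z w phi_Gamma I_Gamma by auto
    then show "w \<in> \<phi> ` Ins" using z D_eq by auto
  qed
qed

lemma phi_D_eq: "\<phi> ` D = D"
proof -
  have "\<phi> ` \<Gamma> = \<Gamma>" using phi_Gamma by force
  then show ?thesis using D_eq phi_Ins_eq by (simp add: image_Un)
qed

lemma phi_pre_Ins: "z \<in> D \<Longrightarrow> \<phi> z \<in> Ins \<Longrightarrow> z \<in> Ins"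
  using D_eq phi_Gamma I_Gamma by auto

lemma phi_pre_Gamma: "z \<in> D \<Longrightarrow> \<phi> z \<in> \<Gamma> \<Longrightarrow> \<phi> z = z"
  using D_eq phi_Gamma I_Gamma phi_Ins by auto

end

context setting begin

definition "EE = {p \<in> D \<times> D. \<phi> (fst p) = \<phi> (snd p) \<and> fst p \<noteq> snd p}"

lemma closed_EE: "closed EE"
  unfolding closed_sequential_limits
proof (intro allI impI, elim conjE)
  fix x :: "nat \<Rightarrow> complex \<times> complex" and l
  assume xE: "\<forall>n. x n \<in> EE" and xl: "x \<longlonglongrightarrow> l"
  obtain a b where l: "l = (a, b)" by (cases l)
  have fa: "(\<lambda>n. fst (x n)) \<longlonglongrightarrow> a" using tendsto_fst[OF xl] l by simp
  have fb: "(\<lambda>n. snd (x n)) \<longlonglongrightarrow> b" using tendsto_snd[OF xl] l by simp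
  have inD1: "fst (x n) \<in> D" and inD2: "snd (x n) \<in> D" for n
    using xE[rule_format, of n] unfolding EE_def by (auto simp: mem_Times_iff)
  have aD: "a \<in> D" using closed_sequentially[OF clo inD1 fa] .
  have bD: "b \<in> D" using closed_sequentially[OF clo inD2 fb] .
  have ta: "(\<lambda>n. \<phi> (fst (x n))) \<longlonglongrightarrow> \<phi> a"
    using continuous_on_tendsto_compose[OF cont_phi fa aD] inD1 by simp
  have tb: "(\<lambda>n. \<phi> (snd (x n))) \<longlonglongrightarrow> \<phi> b"
    using continuous_on_tendsto_compose[OF cont_phi fb bD] inD2 by simp
  have "(\<lambda>n. \<phi> (fst (x n))) = (\<lambda>n. \<phi> (snd (x n)))" using xE unfolding EE_def by auto
  then have eq: "\<phi> a = \<phi> b" using ta tb LIMSEQ_unique by metis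
  have ne: "a \<noteq> b"
  proof
    assume ab: "a = b"
    obtain N where N: "open N" "a \<in> N" "inj_on \<phi> (N \<inter> D)" using loc_inj[OF aD] by blast
    have "eventually (\<lambda>n. fst (x n) \<in> N) sequentially" using topological_tendstoD[OF fa N(1,2)] .
    moreover have "eventually (\<lambda>n. snd (x n) \<in> N) sequentially" using topological_tendstoD[OF fb N(1)] N(2) ab by simp
    ultimately have "eventually (\<lambda>n. fst (x n) \<in> N \<and> snd (x n) \<in> N) sequentially" by (rule eventually_conj)
    then obtain n where n: "fst (x n) \<in> N" "snd (x n) \<in> N" using eventually_sequentially by auto
    have "fst (x n) = snd (x n)" using N(3) n inD1 inD2 xE unfolding EE_def inj_on_def by blast
    then show False using xE unfolding EE_def by auto
  qed
  show "l \<in> EE" unfolding EE_def l using aD bD eq ne by simp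
qed

lemma compact_EE: "compact EE"
proof -
  have "bounded EE" by (rule bounded_subset[OF bounded_Times[OF bdd bdd]]) (auto simp: EE_def)
  then show ?thesis using closed_EE compact_eq_bounded_closed by blast
qed

definition "KK = (\<lambda>p. \<phi> (fst p)) ` EE"

lemma compact_KK: "compact KK"
proof -
  have "continuous_on EE (\<lambda>p. \<phi> (fst p))"
    by (rule continuous_on_compose2[OF cont_phi continuous_on_fst]) (auto simp: EE_def)
  then show ?thesis unfolding KK_def using compact_continuous_image compact_EE by blast
qed

lemma KK_Gamma: "w \<in> KK \<Longrightarrow> w \<notin> \<Gamma>"
proof
  assume "w \<in> KK" "w \<in> \<Gamma>"
  then obtain a b where ab: "a \<in> D" "b \<in> D" "\<phi> a = \<phi> b" "a \<noteq> b" "w = \<phi> a" unfolding KK_def EE_def by auto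
  have "\<phi> a = a" using phi_pre_Gamma[OF ab(1)] \<open>w \<in> \<Gamma>\<close> ab(5) by simp
  moreover have "\<phi> b = b" using phi_pre_Gamma[OF ab(2)] \<open>w \<in> \<Gamma>\<close> ab(5,3) by simp
  ultimately show False using ab(3,4) by simp
qed

lemma KK_Ins: "KK \<inter> Ins = {}"
proof (rule ccontr)
  define A where "A = KK \<inter> Ins"
  assume "KK \<inter> Ins \<noteq> {}"
  then have Ane: "Ins \<inter> A \<noteq> {}" unfolding A_def by blast
  have openA: "open A"
    unfolding open_subopen[of A]
  proof
    fix w assume "w \<in> A"
    then obtain a b where ab: "a \<in> D" "b \<in> D" "\<phi> a = \<phi> b" "a \<noteq> b" "w = \<phi> a" and wI: "w \<in> Ins"
      unfolding A_def KK_def EE_def by auto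
    have aI: "a \<in> Ins" using phi_pre_Ins[OF ab(1)] wI ab(5) by simp
    have bI: "b \<in> Ins" using phi_pre_Ins[OF ab(2)] wI ab(5,3) by simp
    have "\<exists>U V. open U \<and> open V \<and> a \<in> U \<and> b \<in> V \<and> U \<inter> V = {}"
      using separation_t2[of a b] ab(4) by simp
    then obtain Na Nb where N: "open Na" "open Nb" "a \<in> Na" "b \<in> Nb" "Na \<inter> Nb = {}"
      by blast
    define T where "T = \<phi> ` (Na \<inter> Ins) \<inter> \<phi> ` (Nb \<inter> Ins)"
    have oT: "open T" unfolding T_def
      by (intro open_Int open_map) (use N openI in auto)
    have "w \<in> \<phi> ` (Na \<inter> Ins)" using ab(5) aI N(3) by blast
    moreover have "w \<in> \<phi> ` (Nb \<inter> Ins)" using ab(5,3) bI N(4) by (metis IntI image_eqI)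
    ultimately have wT: "w \<in> T" unfolding T_def by blast
    have "T \<subseteq> A"
    proof
      fix w' assume "w' \<in> T"
      then obtain a' b' where a': "a' \<in> Na" "a' \<in> Ins" "w' = \<phi> a'" and b': "b' \<in> Nb" "b' \<in> Ins" "w' = \<phi> b'"
        unfolding T_def by auto
      have "a' \<noteq> b'" using a'(1) b'(1) N(5) by auto
      then have "(a', b') \<in> EE" unfolding EE_def using a' b' I_sub_D by auto
      then have "w' \<in> KK" unfolding KK_def using a'(3) by force
      moreover have "w' \<in> Ins" using phi_Ins a' by auto
      ultimately show "w' \<in> A" unfolding A_def by simp
    qed
    then show "\<exists>T. open T \<and> w \<in> T \<and> T \<subseteq> A" using oT wT by blast
  qed
  have Adiff: "Ins - A \<noteq> {}"
  proof -
    have z0: "\<gamma> 0 \<in> \<Gamma>" unfolding \<Gamma>_def by auto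
    then have "\<gamma> 0 \<notin> KK" using KK_Gamma by blast
    then obtain e where e: "e > 0" "ball (\<gamma> 0) e \<subseteq> - KK"
      using compact_imp_closed[OF compact_KK] open_contains_ball[of "- KK"] by (metis ComplI open_Compl)
    have "\<gamma> 0 \<in> closure Ins" using frI z0 unfolding frontier_def by auto
    then have "ball (\<gamma> 0) e \<inter> Ins \<noteq> {}"
      using open_Int_closure_eq_empty[OF open_ball, of "\<gamma> 0" e Ins] e(1) centre_in_ball[of "\<gamma> 0" e] by blast
    then show ?thesis using e(2) unfolding A_def by blast
  qed
  have "Ins \<inter> frontier A \<noteq> {}" using connected_Int_frontier[OF connI Ane Adiff] .
  moreover have "Ins \<inter> frontier A = {}"
  proof -
    have "closure A \<subseteq> KK" unfolding A_def
      using closure_minimal[OF _ compact_imp_closed[OF compact_KK]] by blast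
    then show ?thesis using interior_open[OF openA] unfolding frontier_def A_def by auto
  qed
  ultimately show False by blast
qed

lemma EE_empty: "EE = {}"
proof (rule ccontr)
  assume "EE \<noteq> {}"
  then obtain p where p: "p \<in> EE" by blast
  then have w: "\<phi> (fst p) \<in> KK" unfolding KK_def by blast
  have "\<phi> (fst p) \<in> D" using p phi_D_eq unfolding EE_def by auto
  then show False using w KK_Ins KK_Gamma D_eq by auto
qed

lemma inj_phi: "inj_on \<phi> D"
  using EE_empty unfolding EE_def inj_on_def by auto

lemma hom_phi: "\<exists>\<psi>. homeomorphism D D \<phi> \<psi>"
  using homeomorphism_compact[OF compactD cont_phi phi_D_eq inj_phi] .

end

lemma bl_pr: "bounded_linear (\<lambda>(z1::complex, z2::complex). ((z1 + z2) / 2, (z1 + z2) / 2))"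
proof -
  have "linear (\<lambda>(z1::complex, z2::complex). ((z1 + z2) / 2, (z1 + z2) / 2))"
    by (rule linearI) (auto simp: split_beta algebra_simps add_divide_distrib scaleR_conv_of_real)
  then show ?thesis by (simp add: linear_conv_bounded_linear)
qed

context setting begin

lemma main: "diffeomorphism_onto ((\<lambda>z. (z, F z)) ` D) ((\<lambda>z. (z, z)) ` D)
           (\<lambda>(z1, z2). ((z1 + z2) / 2, (z1 + z2) / 2))"
proof -
  obtain \<psi> where hom: "homeomorphism D D \<phi> \<psi>" using hom_phi by blast
  have psi_phi: "\<psi> (\<phi> z) = z" if "z \<in> D" for z using homeomorphism_apply1[OF hom that] .
  have phi_psi: "\<phi> (\<psi> w) = w" if "w \<in> D" for w using homeomorphism_apply2[OF hom that] .
  have psiD: "\<psi> w \<in> D" if "w \<in> D" for w using homeomorphism_image2[OF hom] that by blast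
  have cpsi: "continuous_on D \<psi>" using homeomorphism_cont2[OF hom] .
  let ?pr = "\<lambda>(z1::complex, z2::complex). ((z1 + z2) / 2, (z1 + z2) / 2)"
  define g where "g = (\<lambda>(a::complex, b::complex). (\<psi> a, F (\<psi> a)))"
  have pr_gr: "?pr (z, F z) = (\<phi> z, \<phi> z)" for z by (simp add: \<phi>_def)
  have s1: "smooth_on_set ((\<lambda>z. (z, F z)) ` D) ?pr"
    unfolding smooth_on_set_def smooth_open_def
    using Ck_bounded_linear[OF open_UNIV bl_pr] by blast
  have i1: "?pr ` ((\<lambda>z. (z, F z)) ` D) = (\<lambda>z. (z, z)) ` D"
  proof -
    have "?pr ` ((\<lambda>z. (z, F z)) ` D) = (\<lambda>w. (w, w)) ` (\<phi> ` D)"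
      unfolding image_image pr_gr by simp
    then show ?thesis using phi_D_eq by simp
  qed
  have s2: "smooth_on_set ((\<lambda>z. (z, z)) ` D) g"
    unfolding smooth_on_set_def
  proof
    fix x assume "x \<in> (\<lambda>z. (z, z)) ` D"
    then obtain w0 where w0: "w0 \<in> D" "x = (w0, w0)" by auto
    define z0 where "z0 = \<psi> w0"
    have z0D: "z0 \<in> D" using psiD[OF w0(1)] z0_def by simp
    obtain U0 G U' V \<Psi> where U0: "open U0" "z0 \<in> U0" "sm U0 G" "\<forall>y\<in>D \<inter> U0. G y = F y"
      and U': "open U'" "U' \<subseteq> U0" "z0 \<in> U'" "open V" "(z0 + G z0) / 2 \<in> V"
      and homP: "homeomorphism U' V (\<lambda>z. (z + G z) / 2) \<Psi>" and sPsi: "sm V \<Psi>" and sGPsi: "sm V (\<lambda>y. G (\<Psi> y))"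
      by (rule LOC[OF z0D])
    have "(z0 + G z0) / 2 = \<phi> z0" using U0(4) z0D U0(2) unfolding \<phi>_def by auto
    then have w0V: "w0 \<in> V" using U'(5) phi_psi[OF w0(1)] z0_def by simp
    obtain e where e: "e > 0" "ball z0 e \<subseteq> U'" using U'(1,3) open_contains_ball by blast
    obtain d where d: "d > 0" "\<forall>w\<in>D. dist w w0 < d \<longrightarrow> dist (\<psi> w) (\<psi> w0) < e"
      using cpsi w0(1) e(1) unfolding continuous_on_iff by blast
    define V' where "V' = V \<inter> ball w0 d"
    have oV': "open V'" using U'(4) by (simp add: V'_def open_Int)
    have w0V': "w0 \<in> V'" using w0V d(1) by (simp add: V'_def)
    have psiU': "\<psi> w \<in> U'" if "w \<in> D \<inter> V'" for w
    proof -
      have "dist w w0 < d" using that by (simp add: V'_def dist_commute)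
      then have "dist (\<psi> w) z0 < e" using d(2) that z0_def by blast
      then have "\<psi> w \<in> ball z0 e" by (simp add: dist_commute)
      then show ?thesis using e(2) by blast
    qed
    define gext where "gext = (\<lambda>p::complex \<times> complex. (\<Psi> (fst p), G (\<Psi> (fst p))))"
    have sm_ext: "smooth_open (V' \<times> UNIV) gext"
      unfolding smooth_open_def gext_def
    proof (intro conjI allI)
      show "open (V' \<times> (UNIV :: complex set))" using oV' by (simp add: open_Times)
      fix n
      have a: "Ck n V' \<Psi>" using sm_Ck[OF sm_mono[OF oV' _ sPsi]] V'_def by blast
      have b: "Ck n V' (\<lambda>y. G (\<Psi> y))" using sm_Ck[OF sm_mono[OF oV' _ sGPsi]] V'_def by blast
      show "Ck n (V' \<times> UNIV) (\<lambda>p::complex \<times> complex. (\<Psi> (fst p), G (\<Psi> (fst p))))"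
        using Ck_pair[OF open_Times[OF oV' open_UNIV] Ck_fst[OF oV' a] Ck_fst[OF oV' b]] .
    qed
    have agree: "\<forall>y\<in>(\<lambda>z. (z, z)) ` D \<inter> (V' \<times> UNIV). gext y = g y"
    proof
      fix y assume "y \<in> (\<lambda>z. (z, z)) ` D \<inter> (V' \<times> UNIV)"
      then obtain w where w: "w \<in> D" "w \<in> V'" "y = (w, w)" by auto
      have pU: "\<psi> w \<in> U'" using psiU' w by blast
      have pD: "\<psi> w \<in> D" using psiD[OF w(1)] .
      have GF: "G (\<psi> w) = F (\<psi> w)" using U0(4) pU pD U'(2) by auto
      have e1: "(\<psi> w + G (\<psi> w)) / 2 = w" using phi_psi[OF w(1)] GF unfolding \<phi>_def by simp
      have wV: "w \<in> V" using w(2) V'_def by simp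
      have e2: "(\<Psi> w + G (\<Psi> w)) / 2 = w" using homeomorphism_apply2[OF homP wV] by simp
      have PU: "\<Psi> w \<in> U'" using homeomorphism_image2[OF homP] wV by blast
      have "\<Psi> w = \<psi> w"
        using homeomorphism_apply1[OF homP PU] homeomorphism_apply1[OF homP pU] e1 e2 by metis
      then show "gext y = g y" unfolding gext_def g_def w(3) using GF by simp
    qed
    show "\<exists>U ga. x \<in> U \<and> smooth_open U ga \<and> (\<forall>y\<in>(\<lambda>z. (z, z)) ` D \<inter> U. ga y = g y)"
    proof (intro exI conjI)
      show "x \<in> V' \<times> UNIV" using w0V' w0(2) by simp
    qed (rule sm_ext, rule agree)
  qed
  have i2: "g ` ((\<lambda>z. (z, z)) ` D) = (\<lambda>z. (z, F z)) ` D"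
  proof -
    have "g ` ((\<lambda>z. (z, z)) ` D) = (\<lambda>z. (z, F z)) ` (\<psi> ` D)"
      unfolding image_image g_def by simp
    then show ?thesis using homeomorphism_image2[OF hom] by simp
  qed
  have inv1: "\<forall>x\<in>(\<lambda>z. (z, F z)) ` D. g (?pr x) = x"
    using psi_phi unfolding g_def by (auto simp: \<phi>_def[symmetric])
  have inv2: "\<forall>y\<in>(\<lambda>z. (z, z)) ` D. ?pr (g y) = y"
  proof
    fix y assume "y \<in> (\<lambda>z. (z, z)) ` D"
    then obtain w where w: "w \<in> D" "y = (w, w)" by auto
    show "?pr (g y) = y" unfolding g_def w(2) using phi_psi[OF w(1)] by (simp add: \<phi>_def)
  qed
  show ?thesis unfolding diffeomorphism_onto_def using s1 i1 s2 i2 inv1 inv2 by blast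
qed

end

theorem lemma4:
  fixes D :: "complex set" and \<gamma> :: "real \<Rightarrow> complex" and F :: "complex \<Rightarrow> complex"
  assumes "connected D" and "simply_connected D" and "interior D \<noteq> {}"
    and "closed D" and "bounded D"
    and "smooth_closed_curve \<gamma>" and "frontier D = \<gamma> ` {0..1}"
    and "symplectomorphism D F" and "moderate D F"
    and "\<forall>t. F (\<gamma> t) = \<gamma> t"
  shows "diffeomorphism_onto ((\<lambda>z. (z, F z)) ` D) ((\<lambda>z. (z, z)) ` D)
           (\<lambda>(z1, z2). ((z1 + z2) / 2, (z1 + z2) / 2))"
proof -
  interpret setting D \<gamma> F using assms by (unfold_locales) auto
  show ?thesis by (rule main)
qed

end
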